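(* Let $\psi:(0,1]\to(0,\infty)$ with $\psi(1)=1$, $\lim_{r\to0+}\psi(r)=0$, and $I_\psi\subset(0,1)\cup(1,2)$. Then on $C^\psi(\mathbb{R}^d)$ the norm $\|f\|_{C^\psi}$ is equivalent to the norm $\|f\|_{C^0}+[[f]]_{C^\psi}$; i.e. there is $c\ge1$ such that $c^{-1}(\|f\|_{C^0}+[[f]]_{C^\psi})\le\|f\|_{C^\psi}\le c(\|f\|_{C^0}+[[f]]_{C^\psi})$ for all $f\in C^\psi(\mathbb{R}^d)$.
   Context: A function $g:(0,1]\to(0,\infty)$ is almost increasing if there is $c\in(0,1]$ with $c\,g(r)\le g(R)$ for $0<r\le R\le1$, almost decreasing if there is $C\ge1$ with $g(R)\le Cg(r)$ for $0<r\le R\le1$. $M_g=\inf\{\alpha: g(r)/r^\alpha\text{ almost decreasing on }(0,1]\}$, $m_g=\sup\{\alpha: g(r)/r^\alpha\text{ almost increasing on }(0,1]\}$, $I_g=[m_g,M_g]$. $\|f\|_{C^0}=\sup|f|$; $\|D^jf\|_{C^0}=\max_{|\gamma|=j}\|D^\gamma f\|_{C^0}$. For $j\in\mathbb{N}_0$, $[f]_{C^{-j;\psi}}=\sup_{x\in\mathbb{R}^d}\sup_{0<|h|\le1}\frac{|f(x+h)-f(x)|}{\psi(|h|)|h|^{-j}}$, $[D^kf]_{C^{-k;\psi}}=\max_{|\gamma|=k}[D^\gamma f]_{C^{-k;\psi}}$. If $m_\psi\in(k,k+1]$, $k\in\mathbb{N}_0$, $C^\psi(\mathbb{R}^d)$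 is the set of continuous $f$ with all $D^\gamma f$, $|\gamma|\le k$, bounded continuous and $[D^\gamma f]_{C^{-k;\psi}}<\infty$ for $|\gamma|=k$, with $\|f\|_{C^\psi}=\sum_{j=0}^k\|D^jf\|_{C^0}+[D^kf]_{C^{-k;\psi}}$. Finally $[[f]]_{C^\psi}=\sup_{x\in\mathbb{R}^d}\sup_{0<|h|\le1}\frac{|f(x+h)-2f(x)+f(x-h)|}{\psi(|h|)}$. *)

theory Defs
  imports "HOL-Analysis.Analysis" "HOL-Library.Extended_Real"
begin

definition almost_increasing :: "(real \<Rightarrow> real) \<Rightarrow> bool" where
  "almost_increasing g \<longleftrightarrow>
     (\<exists>c. 0 < c \<and> c \<le> 1 \<and> (\<forall>r R. 0 < r \<and> r \<le> R \<and> R \<le> 1 \<longrightarrow> c * g r \<le> g R))"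

definition almost_decreasing :: "(real \<Rightarrow> real) \<Rightarrow> bool" where
  "almost_decreasing g \<longleftrightarrow>
     (\<exists>C. 1 \<le> C \<and> (\<forall>r R. 0 < r \<and> r \<le> R \<and> R \<le> 1 \<longrightarrow> g R \<le> C * g r))"

text \<open>Upper and lower indices, taken in the extended reals (inf of empty set is +infinity,
  sup of empty set is -infinity).\<close>

definition upper_index :: "(real \<Rightarrow> real) \<Rightarrow> ereal" where
  "upper_index g = Inf (ereal ` {\<alpha>. almost_decreasing (\<lambda>r. g r / r powr \<alpha>)})"

definition lower_index :: "(real \<Rightarrow> real) \<Rightarrow> ereal" where
  "lower_index g = Sup (ereal ` {\<alpha>. almost_increasing (\<lambda>r. g r / r powr \<alpha>)})"

definition index_interval :: "(real \<Rightarrow> real) \<Rightarrow> ereal set" where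
  "index_interval g = {x. lower_index g \<le> x \<and> x \<le> upper_index g}"

definition dirderiv :: "('a::real_normed_vector \<Rightarrow> real) \<Rightarrow> 'a \<Rightarrow> 'a \<Rightarrow> real" where
  "dirderiv f b x = deriv (\<lambda>t. f (x + t *\<^sub>R b)) 0"

fun Dlist :: "('a::real_normed_vector \<Rightarrow> real) \<Rightarrow> 'a list \<Rightarrow> 'a \<Rightarrow> real" where
  "Dlist f [] = f"
| "Dlist f (b # bs) = dirderiv (Dlist f bs) b"

fun Dexists :: "('a::real_normed_vector \<Rightarrow> real) \<Rightarrow> 'a list \<Rightarrow> bool" where
  "Dexists f [] = True"
| "Dexists f (b # bs) =
     (Dexists f bs \<and> (\<forall>x. (\<lambda>t. Dlist f bs (x + t *\<^sub>R b)) differentiable (at 0)))"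

definition multi_indices :: "nat \<Rightarrow> 'a::euclidean_space list set" where
  "multi_indices j = {\<gamma>. set \<gamma> \<subseteq> Basis \<and> length \<gamma> = j}"

definition sup_norm :: "('a \<Rightarrow> real) \<Rightarrow> real" where
  "sup_norm f = (SUP x. \<bar>f x\<bar>)"

definition Dnorm :: "nat \<Rightarrow> ('a::euclidean_space \<Rightarrow> real) \<Rightarrow> real" where
  "Dnorm j f = Max ((\<lambda>\<gamma>. sup_norm (Dlist f \<gamma>)) ` multi_indices j)"

definition quot_set :: "(real \<Rightarrow> real) \<Rightarrow> nat \<Rightarrow> ('a::euclidean_space \<Rightarrow> real) \<Rightarrow> real set" where
  "quot_set \<psi> j g = {\<bar>g (x + h) - g x\<bar> / (\<psi> (norm h) * norm h powr (- real j)) | x h.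
                       0 < norm h \<and> norm h \<le> 1}"

definition holder_seminorm :: "(real \<Rightarrow> real) \<Rightarrow> nat \<Rightarrow> ('a::euclidean_space \<Rightarrow> real) \<Rightarrow> real" where
  "holder_seminorm \<psi> j g = Sup (quot_set \<psi> j g)"

definition Dholder :: "(real \<Rightarrow> real) \<Rightarrow> nat \<Rightarrow> ('a::euclidean_space \<Rightarrow> real) \<Rightarrow> real" where
  "Dholder \<psi> k f = Max ((\<lambda>\<gamma>. holder_seminorm \<psi> k (Dlist f \<gamma>)) ` multi_indices k)"

definition psi_order :: "(real \<Rightarrow> real) \<Rightarrow> nat" where
  "psi_order \<psi> = (THE k::nat. ereal (real k) < lower_index \<psi> \<and> lower_index \<psi> \<le> ereal (real k + 1))"

definition in_Cpsi :: "(real \<Rightarrow> real) \<Rightarrow> ('a::euclidean_space \<Rightarrow> real) \<Rightarrow> bool" where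
  "in_Cpsi \<psi> f \<longleftrightarrow>
     (\<exists>k::nat. ereal (real k) < lower_index \<psi> \<and> lower_index \<psi> \<le> ereal (real k + 1) \<and>
        continuous_on UNIV f \<and>
        (\<forall>\<gamma>. set \<gamma> \<subseteq> Basis \<and> length \<gamma> \<le> k \<longrightarrow>
             Dexists f \<gamma> \<and> continuous_on UNIV (Dlist f \<gamma>) \<and> bounded (range (Dlist f \<gamma>))) \<and>
        (\<forall>\<gamma>\<in>multi_indices k. bdd_above (quot_set \<psi> k (Dlist f \<gamma>))))"

definition Cpsi_norm :: "(real \<Rightarrow> real) \<Rightarrow> ('a::euclidean_space \<Rightarrow> real) \<Rightarrow> real" where
  "Cpsi_norm \<psi> f = (\<Sum>j\<le>psi_order \<psi>. Dnorm j f) + Dholder \<psi> (psi_order \<psi>) f"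

definition second_diff_set :: "(real \<Rightarrow> real) \<Rightarrow> ('a::euclidean_space \<Rightarrow> real) \<Rightarrow> real set" where
  "second_diff_set \<psi> f = {\<bar>f (x + h) - 2 * f x + f (x - h)\<bar> / \<psi> (norm h) | x h.
                            0 < norm h \<and> norm h \<le> 1}"

definition second_diff_seminorm :: "(real \<Rightarrow> real) \<Rightarrow> ('a::euclidean_space \<Rightarrow> real) \<Rightarrow> real" where
  "second_diff_seminorm \<psi> f = Sup (second_diff_set \<psi> f)"

end

theory Submission
  imports Defs
begin


lemma alpha_le_beta:
  fixes \<psi> :: "real \<Rightarrow> real"
  assumes pos: "\<forall>r. 0 < r \<and> r \<le> 1 \<longrightarrow> 0 < \<psi> r" and one: "\<psi> 1 = 1"
    and A: "almost_increasing (\<lambda>r. \<psi> r / r powr \<alpha>)"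
    and B: "almost_decreasing (\<lambda>r. \<psi> r / r powr \<beta>)"
  shows "\<alpha> \<le> \<beta>"
proof (rule ccontr)
  assume ab: "\<not> \<alpha> \<le> \<beta>"
  obtain c where c: "0 < c" "c \<le> 1" "\<forall>r R. 0 < r \<and> r \<le> R \<and> R \<le> 1 \<longrightarrow> c * (\<psi> r / r powr \<alpha>) \<le> \<psi> R / R powr \<alpha>"
    using A unfolding almost_increasing_def by blast
  obtain C where C: "1 \<le> C" "\<forall>r R. 0 < r \<and> r \<le> R \<and> R \<le> 1 \<longrightarrow> \<psi> R / R powr \<beta> \<le> C * (\<psi> r / r powr \<beta>)"
    using B unfolding almost_decreasing_def by blast
  define r where "r = (c/(2*C)) powr (1/(\<alpha>-\<beta>))"
  have q: "0 < c/(2*C)" "c/(2*C) \<le> 1" using c C by (auto simp: field_simps)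
  have r0: "0 < r" using q c C by (simp add: r_def)
  have r1: "r \<le> 1" unfolding r_def using q ab by (simp add: powr_le1)
  have rpow: "r powr (\<alpha> - \<beta>) = c/(2*C)" unfolding r_def using q ab c C by (simp add: powr_powr)
  have p: "0 < \<psi> r" using pos r0 r1 by auto
  have h1: "c * (\<psi> r / r powr \<alpha>) \<le> 1" using c(3)[rule_format, of r 1] r0 r1 one by simp
  have h2: "1 \<le> C * (\<psi> r / r powr \<beta>)" using C(2)[rule_format, of r 1] r0 r1 one by simp
  have "c * r powr \<beta> \<le> C * r powr \<alpha>"
  proof -
    have "c * \<psi> r \<le> r powr \<alpha>" using h1 r0 by (simp add: field_simps)
    moreover have "r powr \<beta> \<le> C * \<psi> r" using h2 r0 by (simp add: field_simps)
    ultimately have "c * r powr \<beta> \<le> c * (C * \<psi> r)" using c by (simp add: mult_left_mono)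
    also have "\<dots> = C * (c * \<psi> r)" by simp
    also have "\<dots> \<le> C * r powr \<alpha>" using \<open>c * \<psi> r \<le> r powr \<alpha>\<close> C by (simp add: mult_left_mono)
    finally show ?thesis .
  qed
  hence "c \<le> C * (r powr \<alpha> / r powr \<beta>)" using r0 by (simp add: field_simps)
  also have "r powr \<alpha> / r powr \<beta> = r powr (\<alpha> - \<beta>)" by (simp add: powr_diff)
  finally have "c \<le> C * (c/(2*C))" using rpow by simp
  thus False using c C by (simp add: field_simps)
qed

lemma lower_le_upper:
  fixes \<psi> :: "real \<Rightarrow> real"
  assumes pos: "\<forall>r. 0 < r \<and> r \<le> 1 \<longrightarrow> 0 < \<psi> r" and one: "\<psi> 1 = 1"
  shows "lower_index \<psi> \<le> upper_index \<psi>"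
  unfolding lower_index_def upper_index_def
  by (auto intro!: Sup_least Inf_greatest alpha_le_beta[OF pos one])



lemma ainc_bound:
  fixes \<psi> :: "real \<Rightarrow> real"
  assumes A: "almost_increasing (\<lambda>r. \<psi> r / r powr \<alpha>)"
  shows "\<exists>c>0. \<forall>r R. 0 < r \<and> r \<le> R \<and> R \<le> 1 \<longrightarrow> \<psi> r \<le> (1/c) * (r/R) powr \<alpha> * \<psi> R"
proof -
  obtain c where c: "0 < c" "\<forall>r R. 0 < r \<and> r \<le> R \<and> R \<le> 1 \<longrightarrow> c * (\<psi> r / r powr \<alpha>) \<le> \<psi> R / R powr \<alpha>"
    using A unfolding almost_increasing_def by blast
  show ?thesis
  proof (intro exI[of _ c] conjI allI impI)
    fix r R :: real assume h: "0 < r \<and> r \<le> R \<and> R \<le> 1"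
    have "c * (\<psi> r / r powr \<alpha>) \<le> \<psi> R / R powr \<alpha>" using c h by blast
    hence "\<psi> r \<le> (\<psi> R / R powr \<alpha>) * r powr \<alpha> / c" using c h by (simp add: field_simps)
    thus "\<psi> r \<le> (1/c) * (r/R) powr \<alpha> * \<psi> R" using h by (simp add: powr_divide field_simps)
  qed (use c in auto)
qed

lemma adec_bound:
  fixes \<psi> :: "real \<Rightarrow> real"
  assumes B: "almost_decreasing (\<lambda>r. \<psi> r / r powr \<beta>)"
  shows "\<exists>C\<ge>1. \<forall>r R. 0 < r \<and> r \<le> R \<and> R \<le> 1 \<longrightarrow> \<psi> R \<le> C * (R/r) powr \<beta> * \<psi> r"
proof -
  obtain C where C: "1 \<le> C" "\<forall>r R. 0 < r \<and> r \<le> R \<and> R \<le> 1 \<longrightarrow> \<psi> R / R powr \<beta> \<le> C * (\<psi> r / r powr \<beta>)"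
    using B unfolding almost_decreasing_def by blast
  show ?thesis
  proof (intro exI[of _ C] conjI allI impI)
    fix r R :: real assume h: "0 < r \<and> r \<le> R \<and> R \<le> 1"
    have "\<psi> R / R powr \<beta> \<le> C * (\<psi> r / r powr \<beta>)" using C h by blast
    hence "\<psi> R \<le> C * (\<psi> r / r powr \<beta>) * R powr \<beta>" using h by (simp add: field_simps)
    thus "\<psi> R \<le> C * (R/r) powr \<beta> * \<psi> r" using h by (simp add: powr_divide field_simps)
  qed (use C in auto)
qed

lemma half_diff_bound: "\<bar>B::real\<bar> \<le> K \<Longrightarrow> \<bar>A/2 - B/2\<bar> \<le> \<bar>A\<bar>/2 + K/2"
  using abs_triangle_ineq4[of "A/2" "B/2"] by simp

lemma marchaud:
  fixes f :: "'a::real_normed_vector \<Rightarrow> real" and \<psi> :: "real \<Rightarrow> real"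
  assumes one: "\<psi> 1 = 1" and C: "1 \<le> C"
    and dec: "\<forall>r R. 0 < r \<and> r \<le> R \<and> R \<le> 1 \<longrightarrow> \<psi> R \<le> C * (R/r) powr \<beta> * \<psi> r"
    and b1: "\<beta> < 1"
    and bnd: "\<forall>x. \<bar>f x\<bar> \<le> F"
    and S: "0 \<le> S"
    and sd: "\<forall>x h. 0 < norm h \<and> norm h \<le> 1 \<longrightarrow> \<bar>f (x + h) - 2 * f x + f (x - h)\<bar> \<le> S * \<psi> (norm h)"
    and h: "0 < norm h" "norm h \<le> 1"
  shows "\<bar>f (x + h) - f x\<bar> \<le> (2*C*F + S*C/(2*(1 - 2 powr (\<beta>-1)))) * \<psi> (norm h)"
proof -
  let ?t = "norm h"
  have psi_pos: "\<forall>r. 0 < r \<and> r \<le> 1 \<longrightarrow> 0 < \<psi> r" 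
  proof (intro allI impI)
    fix r :: real assume r: "0 < r \<and> r \<le> 1"
    have "1 \<le> C * (1/r) powr \<beta> * \<psi> r" using dec[rule_format, of r 1] r one by simp
    moreover have "0 < C * (1/r) powr \<beta>" using C r by simp
    ultimately show "0 < \<psi> r"
      by (smt (verit) mult_nonneg_nonpos)
  qed
  have low: "?t \<le> C * \<psi> ?t"
  proof -
    have "1 \<le> C * (1/?t) powr \<beta> * \<psi> ?t" using dec[rule_format, of ?t 1] h one by simp
    hence "?t powr \<beta> \<le> C * \<psi> ?t" using h by (simp add: powr_divide field_simps)
    moreover have "?t \<le> ?t powr \<beta>"
      using h b1 by (metis less_eq_real_def powr_mono' powr_one_eq_one powr_one)
    ultimately show ?thesis by linarith
  qed
  have F: "0 \<le> F" using bnd by (meson abs_ge_zero order_trans)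
  have claim: "2^n * ?t \<le> 2 \<Longrightarrow> \<bar>f (x+h) - f x\<bar> \<le> \<bar>f (x + (2^n) *\<^sub>R h) - f x\<bar> / 2^n + (\<Sum>j<n. S * \<psi> (2^j * ?t) / 2^(j+1))" for n
  proof (induction n)
    case 0 then show ?case by simp
  next
    case (Suc n)
    have le1: "2^n * ?t \<le> 1" using Suc.prems by simp
    hence IH: "\<bar>f (x+h) - f x\<bar> \<le> \<bar>f (x + (2^n) *\<^sub>R h) - f x\<bar> / 2^n + (\<Sum>j<n. S * \<psi> (2^j * ?t) / 2^(j+1))"
      using Suc.IH by simp
    define w where "w = (2^n) *\<^sub>R h"
    have nw: "norm w = 2^n * ?t" unfolding w_def by simp
    have "\<bar>f ((x + w) + w) - 2 * f (x + w) + f ((x + w) - w)\<bar> \<le> S * \<psi> (norm w)"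
      using sd[rule_format, of w "x+w"] h le1 nw by simp
    hence d: "\<bar>f (x + 2 *\<^sub>R w) - 2 * f (x + w) + f x\<bar> \<le> S * \<psi> (2^n * ?t)"
      using nw by (simp add: algebra_simps scaleR_2)
    have eq: "f (x + w) - f x = (f (x + 2 *\<^sub>R w) - f x)/2 - (f (x + 2 *\<^sub>R w) - 2 * f (x + w) + f x)/2"
      by (simp add: field_simps)
    have "\<bar>f (x + w) - f x\<bar> \<le> \<bar>f (x + 2 *\<^sub>R w) - f x\<bar>/2 + S * \<psi> (2^n * ?t) / 2"
      by (subst eq) (rule half_diff_bound[OF d])
    hence "\<bar>f (x + w) - f x\<bar> / 2^n \<le> \<bar>f (x + 2 *\<^sub>R w) - f x\<bar> / 2^(Suc n) + S * \<psi> (2^n * ?t) / 2^(Suc n)"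
      by (simp add: field_simps)
    moreover have "2 *\<^sub>R w = (2^Suc n) *\<^sub>R h" unfolding w_def by simp
    ultimately show ?case using IH unfolding w_def by simp
  qed
  obtain n0 where n0: "1/?t < 2^n0" using real_arch_pow[of 2 "1/?t"] by auto
  define n where "n = (LEAST n. 1/?t < (2::real)^n)"
  have n1: "1/?t < 2^n" unfolding n_def by (rule LeastI[of _ n0]) (rule n0)
  have n0ne: "n \<noteq> 0"
  proof
    assume "n = 0" thus False using n1 h by (simp add: field_simps)
  qed
  then obtain m where m: "n = Suc m" by (cases n) auto
  have "\<not> 1/?t < 2^m" unfolding n_def using m n_def not_less_Least by (metis lessI)
  hence m1: "2^m * ?t \<le> 1" using h by (simp add: field_simps)
  have n2: "2^n * ?t \<le> 2" using m1 m by simp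
  have inv: "1/2^n \<le> ?t" using n1 h by (simp add: field_simps)
  have T1: "\<bar>f (x + (2^n) *\<^sub>R h) - f x\<bar> / 2^n \<le> 2*C*F * \<psi> ?t"
  proof -
    have "\<bar>f (x + (2^n) *\<^sub>R h) - f x\<bar> \<le> 2 * F"
      using bnd[rule_format, of "x + (2^n) *\<^sub>R h"] bnd[rule_format, of x]
        abs_triangle_ineq4[of "f (x + (2^n) *\<^sub>R h)" "f x"] by linarith
    hence "\<bar>f (x + (2^n) *\<^sub>R h) - f x\<bar> / 2^n \<le> 2 * F * (1/2^n)" by (simp add: divide_right_mono)
    also have "\<dots> \<le> 2 * F * ?t" using mult_left_mono[OF inv, of "2*F"] F by simp
    also have "\<dots> \<le> 2 * F * (C * \<psi> ?t)" using low F by (simp add: mult_left_mono)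
    finally show ?thesis by (simp add: algebra_simps)
  qed
  define q where "q = (2::real) powr (\<beta> - 1)"
  have q0: "0 < q" unfolding q_def by simp
  have q1: "q < 1" unfolding q_def using b1 powr_less_mono[of "\<beta>-1" 0 2] by simp
  have T2: "(\<Sum>j<n. S * \<psi> (2^j * ?t) / 2^(j+1)) \<le> (\<Sum>j<n. S * C * \<psi> ?t / 2 * q^j)"
  proof (rule sum_mono)
    fix j assume j: "j \<in> {..<n}"
    have "2^j * ?t \<le> 2^m * ?t" using j m h by (simp add: mult_right_mono)
    hence le: "2^j * ?t \<le> 1" using m1 by simp
    have "\<psi> (2^j * ?t) \<le> C * ((2^j * ?t)/?t) powr \<beta> * \<psi> ?t"
      using dec[rule_format, of ?t "2^j * ?t"] h le by simp
    also have "((2^j * ?t)/?t) powr \<beta> = (2 powr \<beta>)^j" using h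
      by (simp add: powr_power powr_realpow[symmetric] powr_powr mult.commute)
    finally have ps: "\<psi> (2^j * ?t) \<le> C * (2 powr \<beta>)^j * \<psi> ?t" .
    have qe: "(2 powr \<beta>)^j = q^j * 2^j" unfolding q_def
      by (simp add: powr_diff power_divide)
    have "S * \<psi> (2^j * ?t) / 2^(j+1) \<le> S * (C * (2 powr \<beta>)^j * \<psi> ?t) / 2^(j+1)"
      using ps S by (simp add: mult_left_mono divide_right_mono)
    also have "\<dots> = S * C * \<psi> ?t * ((2 powr \<beta>)^j / 2^(j+1))" by simp
    also have "\<dots> = S * C * \<psi> ?t / 2 * q^j" unfolding qe by simp
    finally show "S * \<psi> (2^j * ?t) / 2^(j+1) \<le> S * C * \<psi> ?t / 2 * q^j" .
  qed
  have T3: "(\<Sum>j<n. S * C * \<psi> ?t / 2 * q^j) \<le> S * C * \<psi> ?t / 2 * (1/(1-q))"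
  proof -
    have e: "(\<Sum>j<n. S * C * \<psi> ?t / 2 * q^j) = S * C * \<psi> ?t / 2 * (\<Sum>j<n. q^j)"
      by (simp add: sum_distrib_left)
    have g: "(\<Sum>j<n. q^j) \<le> 1/(1-q)" using q0 q1 by (simp add: sum_gp_strict field_simps)
    have "0 < \<psi> ?t" using psi_pos h by simp
    hence "0 \<le> S * C * \<psi> ?t / 2" using S C by simp
    from mult_left_mono[OF g this] show ?thesis unfolding e .
  qed
  have "\<bar>f (x+h) - f x\<bar> \<le> 2*C*F * \<psi> ?t + S * C * \<psi> ?t / 2 * (1/(1-q))"
    using claim[OF n2] T1 T2 T3 by linarith
  thus ?thesis unfolding q_def using q1 by (simp add: field_simps)
qed



lemma dir_has_deriv:
  fixes f :: "'a::real_normed_vector \<Rightarrow> real"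
  assumes "\<forall>x. (\<lambda>t. f (x + t *\<^sub>R b)) differentiable (at 0)"
  shows "((\<lambda>t. f (x + t *\<^sub>R b)) has_real_derivative dirderiv f b (x + t0 *\<^sub>R b)) (at t0)"
proof -
  define z where "z = x + t0 *\<^sub>R b"
  have "((\<lambda>s. f (z + s *\<^sub>R b)) has_real_derivative dirderiv f b z) (at 0)"
    unfolding dirderiv_def using assms DERIV_deriv_iff_real_differentiable by blast
  hence "((\<lambda>s. f (z + s *\<^sub>R b)) has_real_derivative dirderiv f b z) (at (t0 + - t0))" by simp
  hence "((\<lambda>t. f (z + (t + - t0) *\<^sub>R b)) has_real_derivative dirderiv f b z) (at t0)"
    by (subst (asm) DERIV_shift)
  moreover have "(\<lambda>t. f (z + (t + - t0) *\<^sub>R b)) = (\<lambda>t. f (x + t *\<^sub>R b))"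
    by (rule ext) (simp add: z_def algebra_simps)
  ultimately show ?thesis by (simp add: z_def)
qed

lemma R_bound:
  fixes f :: "'a::real_normed_vector \<Rightarrow> real" and \<psi> :: "real \<Rightarrow> real"
  assumes D: "((\<lambda>t. f (y + t *\<^sub>R e)) has_real_derivative Dy) (at 0)"
    and ne: "norm e = 1"
    and sd: "\<forall>x h. 0 < norm h \<and> norm h \<le> 1 \<longrightarrow> \<bar>f (x + h) - 2 * f x + f (x - h)\<bar> \<le> S * \<psi> (norm h)"
    and inc: "\<forall>r R. 0 < r \<and> r \<le> R \<and> R \<le> 1 \<longrightarrow> \<psi> r \<le> (1/c) * (r/R) powr \<alpha> * \<psi> R"
    and c: "0 < c" and a1: "1 < \<alpha>" and S: "0 \<le> S"
    and pos: "\<forall>r. 0 < r \<and> r \<le> 1 \<longrightarrow> 0 < \<psi> r"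
    and s: "0 < s" "s \<le> 1"
  shows "\<bar>f (y + s *\<^sub>R e) - f y - s * Dy\<bar> \<le> S / (c * (1 - 2 powr (1-\<alpha>))) * \<psi> s"
proof -
  define R where "R t = f (y + t *\<^sub>R e) - f y - t * Dy" for t
  define q where "q = (2::real) powr (1 - \<alpha>)"
  have q0: "0 < q" unfolding q_def by simp
  have q1: "q < 1" unfolding q_def using a1 powr_less_mono[of "1-\<alpha>" 0 2] by simp
  have claim: "\<bar>R s\<bar> \<le> 2^n * \<bar>R (s/2^n)\<bar> + (\<Sum>j<n. 2^j * (S * \<psi> (s/2^(j+1))))" for n
  proof (induction n)
    case 0 then show ?case by simp
  next
    case (Suc n)
    define w where "w = (s/2^(n+1)) *\<^sub>R e"
    have nw: "norm w = s/2^(n+1)" unfolding w_def using ne s by simp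
    have nw1: "norm w \<le> 1" using nw s
      by (smt (verit) divide_le_eq_1 one_le_power)
    have "\<bar>f ((y + w) + w) - 2 * f (y + w) + f ((y + w) - w)\<bar> \<le> S * \<psi> (norm w)"
      using sd[rule_format, of w "y+w"] nw nw1 s by simp
    moreover have "(y + w) + w = y + (s/2^n) *\<^sub>R e" unfolding w_def
      by (simp add: scaleR_add_left[symmetric])
    moreover have "R (s/2^n) = 2 * R (s/2^(n+1)) + (f ((y + w) + w) - 2 * f (y + w) + f ((y + w) - w))"
      unfolding R_def w_def
      by (simp add: scaleR_add_left[symmetric] field_simps)
    ultimately have "\<bar>R (s/2^n)\<bar> \<le> 2 * \<bar>R (s/2^(n+1))\<bar> + S * \<psi> (s/2^(n+1))"
      using nw by (smt (verit))
    hence "2^n * \<bar>R (s/2^n)\<bar> \<le> 2^(n+1) * \<bar>R (s/2^(n+1))\<bar> + 2^n * (S * \<psi> (s/2^(n+1)))"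
    proof -
      have "(2::real)^n * \<bar>R (s/2^n)\<bar> \<le> 2^n * (2 * \<bar>R (s/2^(n+1))\<bar> + S * \<psi> (s/2^(n+1)))"
        using \<open>\<bar>R (s/2^n)\<bar> \<le> _\<close> by (simp add: mult_left_mono)
      thus ?thesis by (simp add: algebra_simps)
    qed
    thus ?case using Suc.IH by simp
  qed
  have sumb: "(\<Sum>j<n. 2^j * (S * \<psi> (s/2^(j+1)))) \<le> S / (c * (1 - q)) * \<psi> s" for n
  proof -
    have "(\<Sum>j<n. 2^j * (S * \<psi> (s/2^(j+1)))) \<le> (\<Sum>j<n. S / c * \<psi> s * q^j)"
    proof (rule sum_mono)
      fix j assume "j \<in> {..<n}"
      have o: "(1::real) \<le> 2^(j+1)" by (rule one_le_power) simp
      have le: "s/2^(j+1) \<le> s" using divide_left_mono[OF o, of s] s by simp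
      have p0: "0 < s/2^(j+1)" using s by simp
      have "\<psi> (s/2^(j+1)) \<le> (1/c) * ((s/2^(j+1))/s) powr \<alpha> * \<psi> s"
        using inc[rule_format, of "s/2^(j+1)" s] le p0 s by simp
      also have "((s/2^(j+1))/s) powr \<alpha> = (2 powr (-\<alpha>))^(j+1)" using s
        by (simp add: powr_power powr_realpow[symmetric] powr_powr powr_minus_divide powr_divide powr_mult mult.commute)
      finally have ps: "\<psi> (s/2^(j+1)) \<le> (1/c) * (2 powr (-\<alpha>))^(j+1) * \<psi> s" .
      have e2: "2^j * (2 powr (-\<alpha>))^(j+1) = 2 powr (-\<alpha>) * q^j" unfolding q_def
        by (simp add: powr_diff powr_minus_divide power_divide field_simps)
      have p1: "2 powr (-\<alpha>) \<le> 1" using a1 powr_mono[of "-\<alpha>" 0 2] by simp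
      have "2^j * (S * \<psi> (s/2^(j+1))) \<le> 2^j * (S * ((1/c) * (2 powr (-\<alpha>))^(j+1) * \<psi> s))"
        using mult_left_mono[OF mult_left_mono[OF ps S], of "2^j"] by simp
      also have "\<dots> = S / c * \<psi> s * q^j * 2 powr (-\<alpha>)" using e2
        by (simp add: ac_simps)
      also have "\<dots> \<le> S / c * \<psi> s * q^j"
      proof -
        have "0 < \<psi> s" using pos s by simp
        hence "0 \<le> S / c * \<psi> s * q^j" using S c q0 by simp
        from mult_left_mono[OF p1 this] show ?thesis by simp
      qed
      finally show "2^j * (S * \<psi> (s/2^(j+1))) \<le> S / c * \<psi> s * q^j" .
    qed
    also have "\<dots> = S / c * \<psi> s * (\<Sum>j<n. q^j)" by (simp add: sum_distrib_left)
    also have "\<dots> \<le> S / c * \<psi> s * (1/(1-q))"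
    proof -
      have g: "(\<Sum>j<n. q^j) \<le> 1/(1-q)" using q0 q1 by (simp add: sum_gp_strict field_simps)
      have "0 < \<psi> s" using pos s by simp
      hence "0 \<le> S / c * \<psi> s" using S c by simp
      from mult_left_mono[OF g this] show ?thesis .
    qed
    finally show ?thesis by simp
  qed
  have "\<bar>R s\<bar> \<le> S / (c * (1 - q)) * \<psi> s"
  proof (rule field_le_epsilon)
    fix \<epsilon> :: real assume ep: "0 < \<epsilon>"
    have "(\<lambda>h. (f (y + h *\<^sub>R e) - f y) / h) \<midarrow>0\<rightarrow> Dy"
      using D unfolding DERIV_def by simp
    then obtain \<delta> where d: "0 < \<delta>" "\<forall>t. t \<noteq> 0 \<and> norm (t - 0) < \<delta> \<longrightarrow> norm ((f (y + t *\<^sub>R e) - f y) / t - Dy) < \<epsilon>"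
      unfolding LIM_eq using ep by blast
    obtain n where n: "s/\<delta> < 2^n" using real_arch_pow[of 2 "s/\<delta>"] by auto
    define t where "t = s/2^n"
    have t0: "t \<noteq> 0" "0 < t" using s unfolding t_def by auto
    have td: "t < \<delta>" using n d s unfolding t_def by (simp add: divide_less_eq mult.commute)
    have lt: "\<bar>(f (y + t *\<^sub>R e) - f y) / t - Dy\<bar> < \<epsilon>" using d t0 td by simp
    have aux: "\<And>A. t * (A / t - Dy) = A - t * Dy" using t0 by (simp add: right_diff_distrib)
    have "R t = t * ((f (y + t *\<^sub>R e) - f y) / t - Dy)" unfolding R_def aux by simp
    hence "\<bar>R t\<bar> = t * \<bar>(f (y + t *\<^sub>R e) - f y) / t - Dy\<bar>" using t0 by (simp add: abs_mult)
    also have "\<dots> < t * \<epsilon>" using mult_strict_left_mono[OF lt t0(2)] .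
    finally have "\<bar>R t\<bar> < \<epsilon> * t" by (simp add: mult.commute)
    hence "2^n * \<bar>R t\<bar> < 2^n * (\<epsilon> * t)" by simp
    also have "2^n * (\<epsilon> * t) = \<epsilon> * s" unfolding t_def by simp
    also have "\<dots> \<le> \<epsilon>" using ep s by (simp add: mult_left_le)
    finally have "2^n * \<bar>R (s/2^n)\<bar> < \<epsilon>" unfolding t_def .
    thus "\<bar>R s\<bar> \<le> S / (c * (1 - q)) * \<psi> s + \<epsilon>" using claim[of n] sumb[of n] by linarith
  qed
  thus ?thesis unfolding R_def q_def .
qed



lemma mvt_abs:
  fixes G :: "real \<Rightarrow> real"
  assumes D: "\<forall>t. (G has_real_derivative G' t) (at t)" and K: "\<forall>t. \<bar>G' t\<bar> \<le> K"
  shows "\<bar>G a - G 0\<bar> \<le> \<bar>a\<bar> * K"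
proof (cases a "0::real" rule: linorder_cases)
  case less
  obtain z where "G 0 - G a = (0 - a) * G' z" using MVT2[OF less, of G G'] D by blast
  hence "\<bar>G a - G 0\<bar> = \<bar>a\<bar> * \<bar>G' z\<bar>" using less by (simp add: abs_mult abs_minus_commute)
  also have "\<dots> \<le> \<bar>a\<bar> * K" using K by (simp add: mult_left_mono)
  finally show ?thesis .
next
  case equal then show ?thesis by simp
next
  case greater
  obtain z where "G a - G 0 = (a - 0) * G' z" using MVT2[OF greater, of G G'] D by blast
  hence "\<bar>G a - G 0\<bar> = \<bar>a\<bar> * \<bar>G' z\<bar>" by (simp add: abs_mult)
  also have "\<dots> \<le> \<bar>a\<bar> * K" using K by (simp add: mult_left_mono)
  finally show ?thesis .
qed

lemma tele:
  fixes f :: "'a::euclidean_space \<Rightarrow> real"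
  assumes D: "\<forall>b\<in>Basis. \<forall>z. (\<lambda>t. f (z + t *\<^sub>R b)) differentiable (at 0)"
    and K: "\<forall>b\<in>Basis. \<forall>z. \<bar>dirderiv f b z - dirderiv f b (z + d)\<bar> \<le> K"
    and S: "finite S"
  shows "S \<subseteq> Basis \<Longrightarrow> \<bar>(f (x + (\<Sum>b\<in>S. (h \<bullet> b) *\<^sub>R b)) - f x) - (f (x + d + (\<Sum>b\<in>S. (h \<bullet> b) *\<^sub>R b)) - f (x + d))\<bar>
     \<le> (\<Sum>b\<in>S. \<bar>h \<bullet> b\<bar>) * K"
  using S
proof (induction S rule: finite_induct)
  case empty then show ?case by simp
next
  case (insert b S)
  define u where "u = (\<Sum>b\<in>S. (h \<bullet> b) *\<^sub>R b)"
  define a where "a = h \<bullet> b"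
  have b: "b \<in> Basis" using insert by auto
  define G where "G t = f (x + u + t *\<^sub>R b) - f (x + d + u + t *\<^sub>R b)" for t
  define G' where "G' t = dirderiv f b (x + u + t *\<^sub>R b) - dirderiv f b (x + d + u + t *\<^sub>R b)" for t
  have Db: "\<forall>z. (\<lambda>t. f (z + t *\<^sub>R b)) differentiable (at 0)" using D b by blast
  have dG: "\<forall>t. (G has_real_derivative G' t) (at t)"
  proof
    fix t
    show "(G has_real_derivative G' t) (at t)"
      unfolding G_def[abs_def] G'_def
      by (rule DERIV_diff[OF dir_has_deriv[OF Db, of "x+u"] dir_has_deriv[OF Db, of "x+d+u"]])
  qed
  have KG: "\<forall>t. \<bar>G' t\<bar> \<le> K"
  proof
    fix t
    have e: "x + d + u + t *\<^sub>R b = (x + u + t *\<^sub>R b) + d" by (simp add: algebra_simps)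
    show "\<bar>G' t\<bar> \<le> K" unfolding G'_def e using K b by blast
  qed
  have m: "\<bar>G a - G 0\<bar> \<le> \<bar>a\<bar> * K" by (rule mvt_abs[OF dG KG])
  have IH: "\<bar>(f (x + u) - f x) - (f (x + d + u) - f (x + d))\<bar> \<le> (\<Sum>b\<in>S. \<bar>h \<bullet> b\<bar>) * K"
    using insert unfolding u_def by auto
  have sumeq: "(\<Sum>b\<in>insert b S. (h \<bullet> b) *\<^sub>R b) = u + a *\<^sub>R b" unfolding u_def a_def
    using insert by (simp add: add.commute)
  have "(f (x + (\<Sum>b\<in>insert b S. (h \<bullet> b) *\<^sub>R b)) - f x) - (f (x + d + (\<Sum>b\<in>insert b S. (h \<bullet> b) *\<^sub>R b)) - f (x + d))
      = (G a - G 0) + ((f (x + u) - f x) - (f (x + d + u) - f (x + d)))"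
    unfolding sumeq G_def by (simp add: add.assoc)
  hence "\<bar>(f (x + (\<Sum>b\<in>insert b S. (h \<bullet> b) *\<^sub>R b)) - f x) - (f (x + d + (\<Sum>b\<in>insert b S. (h \<bullet> b) *\<^sub>R b)) - f (x + d))\<bar>
      \<le> \<bar>a\<bar> * K + (\<Sum>b\<in>S. \<bar>h \<bullet> b\<bar>) * K" using m IH by linarith
  also have "\<dots> = (\<Sum>b\<in>insert b S. \<bar>h \<bullet> b\<bar>) * K" using insert unfolding a_def by (simp add: algebra_simps)
  finally show ?case .
qed



lemma exists_unit_vec: "\<exists>h::'a::euclidean_space. 0 < norm h \<and> norm h \<le> 1"
proof -
  obtain b :: 'a where "b \<in> Basis" using SOME_Basis by blast
  thus ?thesis by (intro exI[of _ b]) simp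
qed

lemma sd_le:
  fixes f :: "'a::euclidean_space \<Rightarrow> real"
  assumes pos: "\<forall>r. 0 < r \<and> r \<le> 1 \<longrightarrow> 0 < \<psi> r"
    and B: "\<forall>x h. 0 < norm h \<and> norm h \<le> 1 \<longrightarrow> \<bar>f (x + h) - 2 * f x + f (x - h)\<bar> \<le> B * \<psi> (norm h)"
  shows "bdd_above (second_diff_set \<psi> f) \<and> second_diff_seminorm \<psi> f \<le> B"
proof -
  have el: "y \<le> B" if yin: "y \<in> second_diff_set \<psi> f" for y
  proof -
    obtain x h where y: "y = \<bar>f (x + h) - 2 * f x + f (x - h)\<bar> / \<psi> (norm h)" and h: "0 < norm h" "norm h \<le> 1"
      using yin unfolding second_diff_set_def by blast
    have p: "0 < \<psi> (norm h)" using pos h by blast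
    show ?thesis unfolding y using B h p by (simp add: divide_le_eq)
  qed
  have ne: "second_diff_set \<psi> f \<noteq> {}" using exists_unit_vec[where 'a='a]
    unfolding second_diff_set_def by blast
  show ?thesis unfolding second_diff_seminorm_def
    using el ne by (auto intro: cSup_least simp: bdd_above_def)
qed

lemma sd_ge:
  fixes f :: "'a::euclidean_space \<Rightarrow> real"
  assumes pos: "\<forall>r. 0 < r \<and> r \<le> 1 \<longrightarrow> 0 < \<psi> r"
    and bdd: "bdd_above (second_diff_set \<psi> f)" and h: "0 < norm h" "norm h \<le> 1"
  shows "\<bar>f (x + h) - 2 * f x + f (x - h)\<bar> \<le> second_diff_seminorm \<psi> f * \<psi> (norm h)"
proof -
  have "\<bar>f (x + h) - 2 * f x + f (x - h)\<bar> / \<psi> (norm h) \<in> second_diff_set \<psi> f"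
    unfolding second_diff_set_def using h by blast
  hence "\<bar>f (x + h) - 2 * f x + f (x - h)\<bar> / \<psi> (norm h) \<le> second_diff_seminorm \<psi> f"
    unfolding second_diff_seminorm_def using bdd by (rule cSup_upper)
  moreover have "0 < \<psi> (norm h)" using pos h by blast
  ultimately show ?thesis by (simp add: divide_le_eq)
qed

lemma sd_nonneg:
  fixes f :: "'a::euclidean_space \<Rightarrow> real"
  assumes pos: "\<forall>r. 0 < r \<and> r \<le> 1 \<longrightarrow> 0 < \<psi> r"
    and bdd: "bdd_above (second_diff_set \<psi> f)"
  shows "0 \<le> second_diff_seminorm \<psi> f"
proof -
  obtain h :: 'a where h: "0 < norm h" "norm h \<le> 1" using exists_unit_vec by blast
  have "\<bar>f (0 + h) - 2 * f 0 + f (0 - h)\<bar> \<le> second_diff_seminorm \<psi> f * \<psi> (norm h)"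
    by (rule sd_ge[OF pos bdd h])
  moreover have "0 < \<psi> (norm h)" using pos h by blast
  ultimately show ?thesis by (smt (verit) zero_le_mult_iff)
qed

lemma qs_le:
  fixes g :: "'a::euclidean_space \<Rightarrow> real"
  assumes pos: "\<forall>r. 0 < r \<and> r \<le> 1 \<longrightarrow> 0 < \<psi> r"
    and B: "\<forall>x h. 0 < norm h \<and> norm h \<le> 1 \<longrightarrow> \<bar>g (x + h) - g x\<bar> \<le> B * (\<psi> (norm h) * norm h powr (- real j))"
  shows "bdd_above (quot_set \<psi> j g) \<and> holder_seminorm \<psi> j g \<le> B"
proof -
  have el: "y \<le> B" if yin: "y \<in> quot_set \<psi> j g" for y
  proof -
    obtain x h where y: "y = \<bar>g (x + h) - g x\<bar> / (\<psi> (norm h) * norm h powr (- real j))" and h: "0 < norm h" "norm h \<le> 1"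
      using yin unfolding quot_set_def by blast
    have p: "0 < \<psi> (norm h) * norm h powr (- real j)" using pos h by simp
    show ?thesis unfolding y using B h p by (simp add: divide_le_eq)
  qed
  have ne: "quot_set \<psi> j g \<noteq> {}" using exists_unit_vec[where 'a='a]
    unfolding quot_set_def by blast
  show ?thesis unfolding holder_seminorm_def
    using el ne by (auto intro: cSup_least simp: bdd_above_def)
qed

lemma qs_ge:
  fixes g :: "'a::euclidean_space \<Rightarrow> real"
  assumes pos: "\<forall>r. 0 < r \<and> r \<le> 1 \<longrightarrow> 0 < \<psi> r"
    and bdd: "bdd_above (quot_set \<psi> j g)" and h: "0 < norm h" "norm h \<le> 1"
  shows "\<bar>g (x + h) - g x\<bar> \<le> holder_seminorm \<psi> j g * (\<psi> (norm h) * norm h powr (- real j))"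
proof -
  have "\<bar>g (x + h) - g x\<bar> / (\<psi> (norm h) * norm h powr (- real j)) \<in> quot_set \<psi> j g"
    unfolding quot_set_def using h by blast
  hence "\<bar>g (x + h) - g x\<bar> / (\<psi> (norm h) * norm h powr (- real j)) \<le> holder_seminorm \<psi> j g"
    unfolding holder_seminorm_def using bdd by (rule cSup_upper)
  moreover have "0 < \<psi> (norm h) * norm h powr (- real j)" using pos h by simp
  ultimately show ?thesis by (simp add: divide_le_eq)
qed

lemma qs_nonneg:
  fixes g :: "'a::euclidean_space \<Rightarrow> real"
  assumes pos: "\<forall>r. 0 < r \<and> r \<le> 1 \<longrightarrow> 0 < \<psi> r"
    and bdd: "bdd_above (quot_set \<psi> j g)"
  shows "0 \<le> holder_seminorm \<psi> j g"
proof -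
  obtain h :: 'a where h: "0 < norm h" "norm h \<le> 1" using exists_unit_vec by blast
  have "\<bar>g (0 + h) - g 0\<bar> \<le> holder_seminorm \<psi> j g * (\<psi> (norm h) * norm h powr (- real j))"
    by (rule qs_ge[OF pos bdd h])
  moreover have "0 < \<psi> (norm h) * norm h powr (- real j)" using pos h by simp
  ultimately show ?thesis by (smt (verit) zero_le_mult_iff)
qed

lemma sn_ge:
  assumes "bounded (range (g :: 'a \<Rightarrow> real))"
  shows "\<bar>g x\<bar> \<le> sup_norm g"
proof -
  obtain a where a: "\<forall>y\<in>range g. norm y \<le> a" using assms unfolding bounded_iff by blast
  have "bdd_above (range (\<lambda>x. \<bar>g x\<bar>))" using a by (auto simp: bdd_above_def)
  thus ?thesis unfolding sup_norm_def by (intro cSUP_upper) auto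
qed

lemma sn_le:
  assumes "\<forall>x. \<bar>g x\<bar> \<le> B"
  shows "sup_norm g \<le> B"
  unfolding sup_norm_def using assms by (auto intro: cSUP_least)

lemma sn_nonneg:
  assumes "bounded (range (g :: 'a \<Rightarrow> real))"
  shows "0 \<le> sup_norm g"
  using sn_ge[OF assms, of undefined] by simp

lemma multi_indices_0: "multi_indices 0 = {[]}"
  unfolding multi_indices_def by auto

lemma multi_indices_1: "multi_indices 1 = (\<lambda>b. [b]) ` Basis"
  unfolding multi_indices_def by (auto simp: length_Suc_conv)

lemma Dnorm_0: "Dnorm 0 f = sup_norm f"
  unfolding Dnorm_def multi_indices_0 by simp

lemma Dholder_0: "Dholder \<psi> 0 f = holder_seminorm \<psi> 0 f"
  unfolding Dholder_def multi_indices_0 by simp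

lemma Dnorm_1: "Dnorm 1 (f::'a::euclidean_space \<Rightarrow> real) = Max ((\<lambda>b. sup_norm (dirderiv f b)) ` Basis)"
  unfolding Dnorm_def multi_indices_1 by (simp add: image_image)

lemma Dholder_1: "Dholder \<psi> 1 (f::'a::euclidean_space \<Rightarrow> real) = Max ((\<lambda>b. holder_seminorm \<psi> 1 (dirderiv f b)) ` Basis)"
  unfolding Dholder_def multi_indices_1 by (simp add: image_image)

lemma psi_order_eq:
  assumes "ereal (real k) < lower_index \<psi>" "lower_index \<psi> \<le> ereal (real k + 1)"
  shows "psi_order \<psi> = k"
  unfolding psi_order_def
proof (rule the_equality)
  show "ereal (real k) < lower_index \<psi> \<and> lower_index \<psi> \<le> ereal (real k + 1)" using assms by simp
next
  fix k' assume k': "ereal (real k') < lower_index \<psi> \<and> lower_index \<psi> \<le> ereal (real k' + 1)"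
  have "ereal (real k') < ereal (real k + 1)" using k' assms by (meson less_le_trans)
  moreover have "ereal (real k) < ereal (real k' + 1)" using k' assms by (meson less_le_trans)
  ultimately show "k' = k" by simp
qed



lemma holder_k1:
  fixes f :: "'a::euclidean_space \<Rightarrow> real" and \<psi> :: "real \<Rightarrow> real"
  assumes e: "e \<in> Basis"
    and Db: "\<forall>z. (\<lambda>t. f (z + t *\<^sub>R e)) differentiable (at 0)"
    and sd: "\<forall>x h. 0 < norm h \<and> norm h \<le> 1 \<longrightarrow> \<bar>f (x + h) - 2 * f x + f (x - h)\<bar> \<le> S * \<psi> (norm h)"
    and inc: "\<forall>r R. 0 < r \<and> r \<le> R \<and> R \<le> 1 \<longrightarrow> \<psi> r \<le> (1/c) * (r/R) powr \<alpha> * \<psi> R"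
    and c: "0 < c" and a1: "1 < \<alpha>" and S: "0 \<le> S"
    and pos: "\<forall>r. 0 < r \<and> r \<le> 1 \<longrightarrow> 0 < \<psi> r"
    and h: "0 < norm h" "norm h \<le> 1"
  shows "\<bar>dirderiv f e (x + h) - dirderiv f e x\<bar> * norm h
          \<le> (2 * S / c + 2 * (S / (c * (1 - 2 powr (1-\<alpha>))))) * \<psi> (norm h)"
proof -
  define s where "s = norm h"
  define K where "K = S / (c * (1 - 2 powr (1-\<alpha>)))"
  define k where "k = s *\<^sub>R e"
  have ne: "norm e = 1" using e by simp
  have s: "0 < s" "s \<le> 1" using h unfolding s_def by auto
  have ps: "0 < \<psi> s" using pos s by blast
  have der: "((\<lambda>t. f (y + t *\<^sub>R e)) has_real_derivative dirderiv f e y) (at 0)" for y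
    using dir_has_deriv[OF Db, of y 0] by simp
  have R1: "\<bar>f (y + s *\<^sub>R e) - f y - s * dirderiv f e y\<bar> \<le> K * \<psi> s" for y
    unfolding K_def by (rule R_bound[OF der ne sd inc c a1 S pos s])
  have incs: "\<psi> r \<le> (1/c) * \<psi> s" if "0 < r" "r \<le> s" for r
  proof -
    have "\<psi> r \<le> (1/c) * (r/s) powr \<alpha> * \<psi> s" using inc that s by blast
    moreover have "(r/s) powr \<alpha> \<le> 1" using that s a1 by (simp add: powr_le1)
    moreover have "(1/c) * (r/s) powr \<alpha> * \<psi> s \<le> (1/c) * 1 * \<psi> s"
      by (rule mult_right_mono[OF mult_left_mono]) (use c ps \<open>(r/s) powr \<alpha> \<le> 1\<close> in auto)
    ultimately show ?thesis by simp
  qed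
  have D2: "\<bar>f (cc + w) - 2 * f cc + f (cc - w)\<bar> \<le> S / c * \<psi> s" if "norm w \<le> s" for cc w
  proof (cases "w = 0")
    case True then show ?thesis using S c ps by simp
  next
    case False
    hence w0: "0 < norm w" by simp
    have "\<bar>f (cc + w) - 2 * f cc + f (cc - w)\<bar> \<le> S * \<psi> (norm w)" using sd w0 that s by simp
    also have "\<dots> \<le> S * ((1/c) * \<psi> s)" using mult_left_mono[OF incs[OF w0 that] S] .
    finally show ?thesis by simp
  qed
  define w1 where "w1 = (1/2) *\<^sub>R (h + k)"
  define w2 where "w2 = (1/2) *\<^sub>R (h - k)"
  define cc where "cc = x + w1"
  have nk: "norm k = s" unfolding k_def using ne s by simp
  have nw1: "norm w1 \<le> s"
  proof -
    have "norm w1 = norm (h + k) / 2" unfolding w1_def by simp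
    also have "\<dots> \<le> (norm h + norm k)/2" using norm_triangle_ineq[of h k] by simp
    finally show ?thesis using nk s_def by simp
  qed
  have nw2: "norm w2 \<le> s"
  proof -
    have "norm w2 = norm (h - k) / 2" unfolding w2_def by simp
    also have "\<dots> \<le> (norm h + norm k)/2" using norm_triangle_ineq4[of h k] by simp
    finally show ?thesis using nk s_def by simp
  qed
  have A1: "w1 + w1 = h + k" unfolding w1_def by (simp add: scaleR_add_left[symmetric])
  have A2: "w1 + w2 = h"
  proof -
    have "w1 + w2 = (1/2) *\<^sub>R h + (1/2) *\<^sub>R h" unfolding w1_def w2_def
      by (simp add: scaleR_add_right scaleR_diff_right)
    also have "\<dots> = h" by (simp add: scaleR_add_left[symmetric])
    finally show ?thesis .
  qed
  have A3: "w1 - w2 = k"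
  proof -
    have "w1 - w2 = (1/2) *\<^sub>R k + (1/2) *\<^sub>R k" unfolding w1_def w2_def
      by (simp add: scaleR_add_right scaleR_diff_right)
    also have "\<dots> = k" by (simp add: scaleR_add_left[symmetric])
    finally show ?thesis .
  qed
  have i1: "cc + w1 = x + h + k" unfolding cc_def using A1 by (simp add: add.assoc)
  have i2: "cc - w1 = x" unfolding cc_def by simp
  have i3: "cc + w2 = x + h" unfolding cc_def using A2 by (simp add: add.assoc)
  have i4: "cc - w2 = x + k" unfolding cc_def using A3 by (metis add_diff_eq)
  have mixed: "\<bar>f (x + h + k) - f (x + h) - f (x + k) + f x\<bar> \<le> 2 * (S / c * \<psi> s)"
  proof -
    have "f (x + h + k) - f (x + h) - f (x + k) + f x
        = (f (cc + w1) - 2 * f cc + f (cc - w1)) - (f (cc + w2) - 2 * f cc + f (cc - w2))"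
      unfolding i1 i2 i3 i4 by simp
    thus ?thesis using D2[OF nw1, of cc] D2[OF nw2, of cc] by linarith
  qed
  have Rxh: "\<bar>f (x + h + k) - f (x + h) - s * dirderiv f e (x + h)\<bar> \<le> K * \<psi> s"
    using R1[of "x + h"] unfolding k_def .
  have Rx: "\<bar>f (x + k) - f x - s * dirderiv f e x\<bar> \<le> K * \<psi> s"
    using R1[of x] unfolding k_def .
  have "s * (dirderiv f e (x + h) - dirderiv f e x)
      = (f (x + h + k) - f (x + h) - f (x + k) + f x)
        - (f (x + h + k) - f (x + h) - s * dirderiv f e (x + h))
        + (f (x + k) - f x - s * dirderiv f e x)"
    by (simp add: algebra_simps)
  hence "\<bar>s * (dirderiv f e (x + h) - dirderiv f e x)\<bar> \<le> 2 * (S / c * \<psi> s) + K * \<psi> s + K * \<psi> s"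
    using mixed Rxh Rx by linarith
  moreover have "\<bar>s * (dirderiv f e (x + h) - dirderiv f e x)\<bar> = \<bar>dirderiv f e (x + h) - dirderiv f e x\<bar> * s"
    using s by (simp add: abs_mult)
  moreover have "2 * (S / c * \<psi> s) + K * \<psi> s + K * \<psi> s = (2 * S / c + 2 * K) * \<psi> s"
    by (simp add: algebra_simps)
  ultimately have "\<bar>dirderiv f e (x + h) - dirderiv f e x\<bar> * s \<le> (2 * S / c + 2 * K) * \<psi> s"
    by simp
  thus ?thesis unfolding s_def K_def .
qed



lemma in_Cpsi_D:
  fixes f :: "'a::euclidean_space \<Rightarrow> real"
  assumes "in_Cpsi \<psi> f" "ereal (real k) < lower_index \<psi>" "lower_index \<psi> \<le> ereal (real k + 1)"
  shows "\<forall>\<gamma>. set \<gamma> \<subseteq> Basis \<and> length \<gamma> \<le> k \<longrightarrow>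
             Dexists f \<gamma> \<and> continuous_on UNIV (Dlist f \<gamma>) \<and> bounded (range (Dlist f \<gamma>))"
    and "\<forall>\<gamma>\<in>multi_indices k. bdd_above (quot_set \<psi> k (Dlist f \<gamma>))"
proof -
  obtain k' where k': "ereal (real k') < lower_index \<psi>" "lower_index \<psi> \<le> ereal (real k' + 1)"
    "\<forall>\<gamma>. set \<gamma> \<subseteq> Basis \<and> length \<gamma> \<le> k' \<longrightarrow>
             Dexists f \<gamma> \<and> continuous_on UNIV (Dlist f \<gamma>) \<and> bounded (range (Dlist f \<gamma>))"
    "\<forall>\<gamma>\<in>multi_indices k'. bdd_above (quot_set \<psi> k' (Dlist f \<gamma>))"
    using assms(1) unfolding in_Cpsi_def by blast
  have "k' = k" using psi_order_eq[OF k'(1,2)] psi_order_eq[OF assms(2,3)] by simp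
  thus "\<forall>\<gamma>. set \<gamma> \<subseteq> Basis \<and> length \<gamma> \<le> k \<longrightarrow>
             Dexists f \<gamma> \<and> continuous_on UNIV (Dlist f \<gamma>) \<and> bounded (range (Dlist f \<gamma>))"
    and "\<forall>\<gamma>\<in>multi_indices k. bdd_above (quot_set \<psi> k (Dlist f \<gamma>))" using k' by auto
qed

lemma case0:
  fixes \<psi> :: "real \<Rightarrow> real"
  assumes pos: "\<forall>r. 0 < r \<and> r \<le> 1 \<longrightarrow> 0 < \<psi> r" and one: "\<psi> 1 = 1"
    and b1: "\<beta> < 1" and B: "almost_decreasing (\<lambda>r. \<psi> r / r powr \<beta>)"
    and k: "ereal (real 0) < lower_index \<psi>" "lower_index \<psi> \<le> ereal (real 0 + 1)"
  shows "\<exists>c::real. 1 \<le> c \<and>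
           (\<forall>f :: 'a::euclidean_space \<Rightarrow> real. in_Cpsi \<psi> f \<longrightarrow>
              bdd_above (second_diff_set \<psi> f) \<and>
              (1 / c) * (sup_norm f + second_diff_seminorm \<psi> f) \<le> Cpsi_norm \<psi> f \<and>
              Cpsi_norm \<psi> f \<le> c * (sup_norm f + second_diff_seminorm \<psi> f))"
proof -
  obtain C where C: "1 \<le> C" "\<forall>r R. 0 < r \<and> r \<le> R \<and> R \<le> 1 \<longrightarrow> \<psi> R \<le> C * (R/r) powr \<beta> * \<psi> r"
    using adec_bound[OF B] by blast
  define A where "A = 2 * C"
  define Bc where "Bc = C / (2 * (1 - 2 powr (\<beta> - 1)))"
  have q1: "2 powr (\<beta> - 1) < 1" using b1 powr_less_mono[of "\<beta>-1" 0 2] by simp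
  have A0: "0 \<le> A" using C unfolding A_def by simp
  have B0: "0 \<le> Bc" using C q1 unfolding Bc_def by simp
  define c where "c = 2 + A + Bc"
  have po: "psi_order \<psi> = 0" using psi_order_eq[OF k] .
  show ?thesis
  proof (intro exI[of _ c] conjI allI impI)
    show "1 \<le> c" using A0 B0 unfolding c_def by simp
    fix f :: "'a \<Rightarrow> real"
    assume f: "in_Cpsi \<psi> f"
    note D = in_Cpsi_D[OF f k]
    have bf: "bounded (range f)" using D(1)[rule_format, of "[]"] by simp
    have bq: "bdd_above (quot_set \<psi> 0 f)" using D(2) by (simp add: multi_indices_0)
    define F where "F = sup_norm f"
    define H where "H = holder_seminorm \<psi> 0 f"
    have F0: "0 \<le> F" unfolding F_def by (rule sn_nonneg[OF bf])
    have H0: "0 \<le> H" unfolding H_def by (rule qs_nonneg[OF pos bq])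
    have Fb: "\<forall>x. \<bar>f x\<bar> \<le> F" unfolding F_def using sn_ge[OF bf] by blast
    have Hb: "\<bar>f (x + h) - f x\<bar> \<le> H * \<psi> (norm h)" if "0 < norm h" "norm h \<le> 1" for x h
      using qs_ge[OF pos bq that, of x] that unfolding H_def by simp
    have sd2: "\<forall>x h. 0 < norm h \<and> norm h \<le> 1 \<longrightarrow> \<bar>f (x + h) - 2 * f x + f (x - h)\<bar> \<le> (2 * H) * \<psi> (norm h)"
    proof (intro allI impI)
      fix x h :: 'a assume h: "0 < norm h \<and> norm h \<le> 1"
      have "\<bar>f (x + h) - f x\<bar> \<le> H * \<psi> (norm h)" using Hb h by blast
      moreover have "\<bar>f ((x - h) + h) - f (x - h)\<bar> \<le> H * \<psi> (norm h)" using Hb h by blast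
      ultimately show "\<bar>f (x + h) - 2 * f x + f (x - h)\<bar> \<le> (2 * H) * \<psi> (norm h)" by simp
    qed
    from sd_le[OF pos sd2] have bs: "bdd_above (second_diff_set \<psi> f)" and S2: "second_diff_seminorm \<psi> f \<le> 2 * H"
      by auto
    define S where "S = second_diff_seminorm \<psi> f"
    have S0: "0 \<le> S" unfolding S_def by (rule sd_nonneg[OF pos bs])
    have sdS: "\<forall>x h. 0 < norm h \<and> norm h \<le> 1 \<longrightarrow> \<bar>f (x + h) - 2 * f x + f (x - h)\<bar> \<le> S * \<psi> (norm h)"
      unfolding S_def using sd_ge[OF pos bs] by blast
    have M: "\<forall>x h. 0 < norm h \<and> norm h \<le> 1 \<longrightarrow> \<bar>f (x + h) - f x\<bar> \<le> (A * F + Bc * S) * (\<psi> (norm h) * norm h powr (- real 0))"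
    proof (intro allI impI)
      fix x h :: 'a assume h: "0 < norm h \<and> norm h \<le> 1"
      have "\<bar>f (x + h) - f x\<bar> \<le> (2*C*F + S*C/(2*(1 - 2 powr (\<beta>-1)))) * \<psi> (norm h)"
        by (rule marchaud[OF one C(1) C(2) b1 Fb S0 sdS conjunct1[OF h] conjunct2[OF h]])
      moreover have "2*C*F + S*C/(2*(1 - 2 powr (\<beta>-1))) = A * F + Bc * S"
        unfolding A_def Bc_def by simp
      ultimately show "\<bar>f (x + h) - f x\<bar> \<le> (A * F + Bc * S) * (\<psi> (norm h) * norm h powr (- real 0))"
        using h by simp
    qed
    have HU: "H \<le> A * F + Bc * S" unfolding H_def using qs_le[OF pos M] by blast
    have N: "Cpsi_norm \<psi> f = F + H"
      unfolding Cpsi_norm_def po F_def H_def by (simp add: Dnorm_0 Dholder_0)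
    show "bdd_above (second_diff_set \<psi> f)" by (rule bs)
    have c0: "0 < c" using A0 B0 unfolding c_def by simp
    have "F \<le> c * F" using mult_right_mono[of 1 c F] F0 A0 B0 unfolding c_def by simp
    moreover have "2 * H \<le> c * H" using mult_right_mono[of 2 c H] H0 A0 B0 unfolding c_def by simp
    ultimately have "F + S \<le> c * (F + H)" using S2 unfolding S_def by (simp add: distrib_left)
    thus "1 / c * (sup_norm f + second_diff_seminorm \<psi> f) \<le> Cpsi_norm \<psi> f"
      using c0 unfolding N F_def S_def by (simp add: field_simps)
    have "F + H \<le> c * (F + S)"
    proof -
      have "F + H \<le> F + A * F + Bc * S" using HU by simp
      also have "\<dots> \<le> c * F + c * S"
      proof -
        have "(1 + A) * F \<le> c * F" using mult_right_mono[of "1 + A" c F] F0 B0 unfolding c_def by simp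
        moreover have "Bc * S \<le> c * S" using mult_right_mono[of Bc c S] S0 A0 unfolding c_def by simp
        ultimately show ?thesis by (simp add: algebra_simps)
      qed
      finally show ?thesis by (simp add: distrib_left)
    qed
    thus "Cpsi_norm \<psi> f \<le> c * (sup_norm f + second_diff_seminorm \<psi> f)"
      unfolding N F_def S_def .
  qed
qed



lemma case1:
  fixes \<psi> :: "real \<Rightarrow> real"
  assumes pos: "\<forall>r. 0 < r \<and> r \<le> 1 \<longrightarrow> 0 < \<psi> r" and one: "\<psi> 1 = 1"
    and a1: "1 < \<alpha>" and Ai: "almost_increasing (\<lambda>r. \<psi> r / r powr \<alpha>)"
    and k: "ereal (real 1) < lower_index \<psi>" "lower_index \<psi> \<le> ereal (real 1 + 1)"
  shows "\<exists>c::real. 1 \<le> c \<and>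
           (\<forall>f :: 'a::euclidean_space \<Rightarrow> real. in_Cpsi \<psi> f \<longrightarrow>
              bdd_above (second_diff_set \<psi> f) \<and>
              (1 / c) * (sup_norm f + second_diff_seminorm \<psi> f) \<le> Cpsi_norm \<psi> f \<and>
              Cpsi_norm \<psi> f \<le> c * (sup_norm f + second_diff_seminorm \<psi> f))"
proof -
  obtain c0 where c0: "0 < c0" "\<forall>r R. 0 < r \<and> r \<le> R \<and> R \<le> 1 \<longrightarrow> \<psi> r \<le> (1/c0) * (r/R) powr \<alpha> * \<psi> R"
    using ainc_bound[OF Ai] by blast
  define Q where "Q = 1 / (c0 * (1 - 2 powr (1-\<alpha>)))"
  have q1: "2 powr (1 - \<alpha>) < 1" using a1 powr_less_mono[of "1-\<alpha>" 0 2] by simp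
  have Q0: "0 \<le> Q" unfolding Q_def using c0 q1 by simp
  define dd where "dd = real DIM('a)"
  have dd1: "1 \<le> dd" unfolding dd_def by simp
  define c where "c = 3 + 3 * Q + 2 / c0 + dd"
  have c3: "3 \<le> c" and cQ: "3 * Q + 2 / c0 \<le> c" and cd: "1 + dd \<le> c"
    unfolding c_def using Q0 c0 dd1 by auto
  have po: "psi_order \<psi> = 1" using psi_order_eq[OF k] .
  show ?thesis
  proof (intro exI[of _ c] conjI allI impI)
    show "1 \<le> c" using c3 by simp
    fix f :: "'a \<Rightarrow> real"
    assume f: "in_Cpsi \<psi> f"
    note D = in_Cpsi_D[OF f k]
    have bf: "bounded (range f)" using D(1)[rule_format, of "[]"] by simp
    have Db: "\<forall>z. (\<lambda>t. f (z + t *\<^sub>R b)) differentiable (at 0)" if "b \<in> Basis" for b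
      using D(1)[rule_format, of "[b]"] that by simp
    have bDb: "bounded (range (dirderiv f b))" if "b \<in> Basis" for b
      using D(1)[rule_format, of "[b]"] that by simp
    have bq: "bdd_above (quot_set \<psi> 1 (dirderiv f b))" if "b \<in> Basis" for b
    proof -
      have "[b] \<in> multi_indices 1" unfolding multi_indices_def using that by simp
      thus ?thesis using D(2) by fastforce
    qed
    define F where "F = sup_norm f"
    define DH where "DH = Dholder \<psi> 1 f"
    define DN where "DN = Dnorm 1 f"
    have F0: "0 \<le> F" unfolding F_def by (rule sn_nonneg[OF bf])
    have Fb: "\<forall>x. \<bar>f x\<bar> \<le> F" unfolding F_def using sn_ge[OF bf] by blast
    have finB: "finite ((\<lambda>b. holder_seminorm \<psi> 1 (dirderiv f b)) ` (Basis::'a set))" by simp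
    have finB2: "finite ((\<lambda>b. sup_norm (dirderiv f b)) ` (Basis::'a set))" by simp
    have neB: "(Basis::'a set) \<noteq> {}" by simp
    have HbDH: "holder_seminorm \<psi> 1 (dirderiv f b) \<le> DH" if "b \<in> Basis" for b
      unfolding DH_def Dholder_1 using that finB by (simp add: Max_ge)
    obtain b0 :: 'a where b0: "b0 \<in> Basis" using SOME_Basis by blast
    have DH0: "0 \<le> DH" using HbDH[OF b0] qs_nonneg[OF pos bq[OF b0]] by simp
    have DN0: "0 \<le> DN"
    proof -
      have "sup_norm (dirderiv f b0) \<le> DN" unfolding DN_def Dnorm_1 using b0 finB2 by (simp add: Max_ge)
      thus ?thesis using sn_nonneg[OF bDb[OF b0]] by simp
    qed
    have sdA: "\<forall>x h. 0 < norm h \<and> norm h \<le> 1 \<longrightarrow> \<bar>f (x + h) - 2 * f x + f (x - h)\<bar> \<le> (dd * DH) * \<psi> (norm h)"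
    proof (intro allI impI)
      fix x h :: 'a assume h: "0 < norm h \<and> norm h \<le> 1"
      have ph: "0 < \<psi> (norm h)" using pos h by blast
      define K where "K = DH * \<psi> (norm h) / norm h"
      have K: "\<forall>b\<in>Basis. \<forall>z. \<bar>dirderiv f b z - dirderiv f b (z + - h)\<bar> \<le> K"
      proof (intro ballI allI)
        fix b z assume b: "b \<in> (Basis::'a set)"
        have "\<bar>dirderiv f b ((z + - h) + h) - dirderiv f b (z + - h)\<bar>
              \<le> holder_seminorm \<psi> 1 (dirderiv f b) * (\<psi> (norm h) * norm h powr (- real 1))"
          using qs_ge[OF pos bq[OF b]] h by blast
        also have "\<dots> \<le> DH * (\<psi> (norm h) * norm h powr (- real 1))"
          by (rule mult_right_mono[OF HbDH[OF b]]) (use ph in simp)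
        also have "\<dots> = K" unfolding K_def using h by (simp add: powr_minus_divide)
        finally show "\<bar>dirderiv f b z - dirderiv f b (z + - h)\<bar> \<le> K" by simp
      qed
      have DB: "\<forall>b\<in>Basis. \<forall>z. (\<lambda>t. f (z + t *\<^sub>R b)) differentiable (at 0)" using Db by blast
      have T: "\<bar>(f (x + (\<Sum>b\<in>Basis. (h \<bullet> b) *\<^sub>R b)) - f x) - (f (x + - h + (\<Sum>b\<in>Basis. (h \<bullet> b) *\<^sub>R b)) - f (x + - h))\<bar>
          \<le> (\<Sum>b\<in>Basis. \<bar>h \<bullet> b\<bar>) * K"
        by (rule tele[OF DB K finite_Basis order_refl])
      have "(\<Sum>b\<in>Basis. \<bar>h \<bullet> b\<bar>) \<le> (\<Sum>b\<in>(Basis::'a set). norm h)"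
        by (rule sum_mono) (rule Basis_le_norm)
      also have "\<dots> = dd * norm h" unfolding dd_def by simp
      finally have sb: "(\<Sum>b\<in>Basis. \<bar>h \<bullet> b\<bar>) \<le> dd * norm h" .
      have K0: "0 \<le> K" unfolding K_def using DH0 ph h by simp
      have "\<bar>f (x + h) - 2 * f x + f (x - h)\<bar> \<le> (\<Sum>b\<in>Basis. \<bar>h \<bullet> b\<bar>) * K"
        using T by (simp add: euclidean_representation algebra_simps)
      also have "\<dots> \<le> (dd * norm h) * K" using sb K0 by (simp add: mult_right_mono)
      also have "\<dots> = (dd * DH) * \<psi> (norm h)" unfolding K_def using h by simp
      finally show "\<bar>f (x + h) - 2 * f x + f (x - h)\<bar> \<le> (dd * DH) * \<psi> (norm h)" .
    qed
    from sd_le[OF pos sdA] have bs: "bdd_above (second_diff_set \<psi> f)"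
      and SA: "second_diff_seminorm \<psi> f \<le> dd * DH" by auto
    define S where "S = second_diff_seminorm \<psi> f"
    have S0: "0 \<le> S" unfolding S_def by (rule sd_nonneg[OF pos bs])
    have sdS: "\<forall>x h. 0 < norm h \<and> norm h \<le> 1 \<longrightarrow> \<bar>f (x + h) - 2 * f x + f (x - h)\<bar> \<le> S * \<psi> (norm h)"
      unfolding S_def using sd_ge[OF pos bs] by blast
    have SQ: "S / (c0 * (1 - 2 powr (1-\<alpha>))) = S * Q" unfolding Q_def by simp
    have DNb: "DN \<le> 2 * F + S * Q"
    proof -
      have "sup_norm (dirderiv f b) \<le> 2 * F + S * Q" if b: "b \<in> Basis" for b
      proof (rule sn_le, rule allI)
        fix y
        have der: "((\<lambda>t. f (y + t *\<^sub>R b)) has_real_derivative dirderiv f b y) (at 0)"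
          using dir_has_deriv[OF Db[OF b], of y 0] by simp
        have "\<bar>f (y + 1 *\<^sub>R b) - f y - 1 * dirderiv f b y\<bar> \<le> S / (c0 * (1 - 2 powr (1-\<alpha>))) * \<psi> 1"
          by (rule R_bound[OF der _ sdS c0(2) c0(1) a1 S0 pos]) (use b in auto)
        hence r: "\<bar>f (y + b) - f y - dirderiv f b y\<bar> \<le> S * Q" using SQ one by simp
        have "\<bar>f (y + b) - f y\<bar> \<le> 2 * F"
          using Fb[rule_format, of "y + b"] Fb[rule_format, of y] abs_triangle_ineq4[of "f (y + b)" "f y"]
          by linarith
        thus "\<bar>dirderiv f b y\<bar> \<le> 2 * F + S * Q" using r by linarith
      qed
      thus ?thesis unfolding DN_def Dnorm_1 using finB2 by (simp add: Max_le_iff)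
    qed
    have DHb: "DH \<le> 2 * S / c0 + 2 * (S * Q)"
    proof -
      have "holder_seminorm \<psi> 1 (dirderiv f b) \<le> 2 * S / c0 + 2 * (S * Q)" if b: "b \<in> Basis" for b
      proof -
        have "\<forall>x h. 0 < norm h \<and> norm h \<le> 1 \<longrightarrow> \<bar>dirderiv f b (x + h) - dirderiv f b x\<bar>
             \<le> (2 * S / c0 + 2 * (S * Q)) * (\<psi> (norm h) * norm h powr (- real 1))"
        proof (intro allI impI)
          fix x h :: 'a assume h: "0 < norm h \<and> norm h \<le> 1"
          have "\<bar>dirderiv f b (x + h) - dirderiv f b x\<bar> * norm h
              \<le> (2 * S / c0 + 2 * (S / (c0 * (1 - 2 powr (1-\<alpha>))))) * \<psi> (norm h)"
            using h by (intro holder_k1[OF b Db[OF b] sdS c0(2) c0(1) a1 S0 pos]) auto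
          hence "\<bar>dirderiv f b (x + h) - dirderiv f b x\<bar> * norm h \<le> (2 * S / c0 + 2 * (S * Q)) * \<psi> (norm h)"
            using SQ by simp
          thus "\<bar>dirderiv f b (x + h) - dirderiv f b x\<bar>
             \<le> (2 * S / c0 + 2 * (S * Q)) * (\<psi> (norm h) * norm h powr (- real 1))"
            using h by (simp add: powr_minus_divide pos_le_divide_eq mult.assoc)
        qed
        thus ?thesis using qs_le[OF pos] by blast
      qed
      thus ?thesis unfolding DH_def Dholder_1 using finB by (simp add: Max_le_iff)
    qed
    have N: "Cpsi_norm \<psi> f = F + DN + DH"
      unfolding Cpsi_norm_def po F_def DN_def DH_def by (simp add: Dnorm_0)
    show "bdd_above (second_diff_set \<psi> f)" by (rule bs)
    have c0p: "0 < c" using c3 by simp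
    have "F + S \<le> c * (F + DN + DH)"
    proof -
      have "F + S \<le> F + dd * DH" using SA unfolding S_def by simp
      also have "\<dots> \<le> (1 + dd) * (F + DN + DH)" using F0 DN0 DH0 dd1
        by (simp add: algebra_simps mult_left_mono)
      also have "\<dots> \<le> c * (F + DN + DH)" using cd F0 DN0 DH0 by (simp add: mult_right_mono)
      finally show ?thesis .
    qed
    thus "1 / c * (sup_norm f + second_diff_seminorm \<psi> f) \<le> Cpsi_norm \<psi> f"
      using c0p unfolding N F_def S_def by (simp add: field_simps)
    have "F + DN + DH \<le> 3 * F + (3 * Q + 2 / c0) * S" using DNb DHb by (simp add: algebra_simps)
    also have "\<dots> \<le> c * F + c * S"
    proof -
      have "3 * F \<le> c * F" using mult_right_mono[OF c3 F0] .
      moreover have "(3 * Q + 2 / c0) * S \<le> c * S" using mult_right_mono[OF cQ S0] .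
      ultimately show ?thesis by simp
    qed
    finally show "Cpsi_norm \<psi> f \<le> c * (sup_norm f + second_diff_seminorm \<psi> f)"
      unfolding N F_def S_def by (simp add: distrib_left)
  qed
qed



theorem proposition2p5:
  fixes \<psi> :: "real \<Rightarrow> real"
  assumes pos: "\<forall>r. 0 < r \<and> r \<le> 1 \<longrightarrow> 0 < \<psi> r"
    and one: "\<psi> 1 = 1"
    and lim: "(\<psi> \<longlongrightarrow> 0) (at_right 0)"
    and idx: "index_interval \<psi> \<subseteq> ereal ` ({0<..<1} \<union> {1<..<2})"
  shows "\<exists>c::real. 1 \<le> c \<and>
           (\<forall>f :: 'a::euclidean_space \<Rightarrow> real. in_Cpsi \<psi> f \<longrightarrow>
              bdd_above (second_diff_set \<psi> f) \<and>
              (1 / c) * (sup_norm f + second_diff_seminorm \<psi> f) \<le> Cpsi_norm \<psi> f \<and>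
              Cpsi_norm \<psi> f \<le> c * (sup_norm f + second_diff_seminorm \<psi> f))"
proof (cases "\<exists>k::nat. ereal (real k) < lower_index \<psi> \<and> lower_index \<psi> \<le> ereal (real k + 1)")
  case False
  have "\<not> in_Cpsi \<psi> f" for f :: "'a \<Rightarrow> real" using False unfolding in_Cpsi_def by blast
  thus ?thesis by (intro exI[of _ 1]) auto
next
  case True
  then obtain k :: nat where k: "ereal (real k) < lower_index \<psi>" "lower_index \<psi> \<le> ereal (real k + 1)"
    by blast
  have mM: "lower_index \<psi> \<le> upper_index \<psi>" by (rule lower_le_upper[OF pos one])
  have "lower_index \<psi> \<in> index_interval \<psi>" unfolding index_interval_def using mM by simp
  then obtain r where r: "lower_index \<psi> = ereal r" "r \<in> {0<..<1} \<union> {1<..<2}" using idx by blast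
  have "real k < r" using k(1) r(1) by simp
  hence "real k < 2" using r(2) by auto
  hence "k < 2" by simp
  hence "k = 0 \<or> k = 1" by auto
  thus ?thesis
  proof
    assume k0: "k = 0"
    have M1: "upper_index \<psi> < ereal 1"
    proof (rule ccontr)
      assume "\<not> upper_index \<psi> < ereal 1"
      hence "ereal 1 \<le> upper_index \<psi>" by simp
      moreover have "lower_index \<psi> \<le> ereal 1" using k(2) k0 by simp
      ultimately have "ereal 1 \<in> index_interval \<psi>" unfolding index_interval_def by simp
      hence "ereal 1 \<in> ereal ` ({0<..<1} \<union> {1<..<2})" using idx by blast
      thus False by auto
    qed
    then obtain \<beta> where \<beta>: "almost_decreasing (\<lambda>r. \<psi> r / r powr \<beta>)" "\<beta> < 1"
      unfolding upper_index_def Inf_less_iff by auto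
    show ?thesis by (rule case0[OF pos one \<beta>(2) \<beta>(1)]) (use k k0 in simp_all)
  next
    assume k1: "k = 1"
    have "ereal 1 < lower_index \<psi>" using k(1) k1 by simp
    then obtain \<alpha> where \<alpha>: "almost_increasing (\<lambda>r. \<psi> r / r powr \<alpha>)" "1 < \<alpha>"
      unfolding lower_index_def less_Sup_iff by auto
    show ?thesis by (rule case1[OF pos one \<alpha>(2) \<alpha>(1)]) (use k k1 in simp_all)
  qed
qed


end
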